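(* Let $x_0\in\mathbb{R}$, $\alpha\in\mathbb{R}$, $0\le\gamma<1$, and let $S(\sigma)=\alpha+\frac{\gamma}{1-\gamma}(\alpha-\sigma)$. Let $\psi$ be a wavelet in the Schwartz class with all moments vanishing, and let $f$ be the function (or distribution) defined near $x_0$ by $$f(x)=\sum_{j\ge0}\ \sum_{k\in\mathbb{Z},\ |k-2^jx_0|<2^j} c_{j,k}\,\psi(2^jx-k).$$ Then the 2-microlocal frontier of $f$ at $x_0$ is $S$ if and only if there exist positive sequences $(\mathcal{C}_{j,k})$, $(\lambda_{j,k})$ (indexed by $j\ge0$, $|k-2^jx_0|<2^j$) such that for all $j\ge0$ and $|k-2^jx_0|<2^j$, $$|c_{j,k}|\le \mathcal{C}_{j,k}\cdot\inf_{\sigma\in\mathbb{R}}\left\{2^{-jS(\sigma)}\left(\frac{1+|k-2^jx_0|}{\lambda_{j,k}}\right)^{S(\sigma)-\sigma}\right\}\qquad(\ast)$$ and: (i) for every $C\in\mathbb{R}$ and every choice of integers $k_j$ with $|k_j-2^jx_0|<2^j$, $$\limsup_{j\to+\infty}\left(\frac{\log_2(\mathcal{C}_{j,k_j})}{j}+C\,\frac{\log_2(\lambda_{j,k_j})}{j}\right)\le0;$$ (ii) there exists a sequence $(j_n,k_n)$ with $j_n$ strictly increasing and $|k_n-2^{j_n}x_0|<2^{j_n}$ such that equality holds in $(\ast)$ for $(j,k)=(j_n,k_n)$, $c_{j_n,k_n}\neq0$, and $$\lim_{n\to+\infty}\frac{\log_2(\mathcal{C}_{j_n,k_n})}{j_n}=0,\qquad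 \lim_{n\to+\infty}\frac{\log_2(\lambda_{j_n,k_n})}{j_n}=0.$$
   Context: A wavelet is a function $\psi\in L^2(\mathbb{R})$ such that $\{2^{j/2}\psi(2^jx-k)\}_{j,k\in\mathbb{Z}}$ is an orthonormal basis of $L^2(\mathbb{R})$; the wavelet coefficients of $f$ are $c_{j,k}=2^{j/2}\langle f,\psi_{j,k}\rangle$ with $\psi_{j,k}(x)=2^{j/2}\psi(2^jx-k)$. For $s,s'\in\mathbb{R}$, the (local) 2-microlocal space $C^{s,s'}_{x_0}$ is defined as: $f\in C^{s,s'}_{x_0}$ iff there is $C>0$ with $|c_{j,k}|\le C\,2^{-js}(1+|k-2^jx_0|)^{-s'}$ for all $j\ge0$ and $k\in\mathbb{Z}$ with $|k/2^j-x_0|<1$. The 2-microlocal frontier of $f$ at $x_0$ is the function $\sigma\mapsto\sup\{s: f\in C^{s,\sigma-s}_{x_0}\}$. *)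

theory Defs
  imports "HOL-Analysis.Analysis"
begin

text \<open>Wavelet coefficients are given as a family c :: nat => int => real,
  c j k standing for c_{j,k} (j >= 0). The local 2-microlocal space only
  involves indices with j >= 0 and |k/2^j - x0| < 1.\<close>

definition in_index :: "real \<Rightarrow> nat \<Rightarrow> int \<Rightarrow> bool" where
  "in_index x0 j k \<longleftrightarrow> \<bar>real_of_int k / 2 ^ j - x0\<bar> < 1"

definition two_microlocal :: "(nat \<Rightarrow> int \<Rightarrow> real) \<Rightarrow> real \<Rightarrow> real \<Rightarrow> real \<Rightarrow> bool" where
  "two_microlocal c x0 s s' \<longleftrightarrow>
     (\<exists>C>0. \<forall>j k. in_index x0 j k \<longrightarrow>
        \<bar>c j k\<bar> \<le> C * 2 powr (- real j * s) * (1 + \<bar>real_of_int k - 2 ^ j * x0\<bar>) powr (- s'))"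

definition microlocal_frontier :: "(nat \<Rightarrow> int \<Rightarrow> real) \<Rightarrow> real \<Rightarrow> real \<Rightarrow> ereal" where
  "microlocal_frontier c x0 \<sigma> = Sup {ereal s | s. two_microlocal c x0 s (\<sigma> - s)}"

definition S_line :: "real \<Rightarrow> real \<Rightarrow> real \<Rightarrow> real" where
  "S_line \<alpha> \<gamma> \<sigma> = \<alpha> + \<gamma> / (1 - \<gamma>) * (\<alpha> - \<sigma>)"

definition bound_inf :: "real \<Rightarrow> real \<Rightarrow> real \<Rightarrow> nat \<Rightarrow> int \<Rightarrow> real \<Rightarrow> real" where
  "bound_inf \<alpha> \<gamma> x0 j k lam =
     Inf (range (\<lambda>\<sigma>. 2 powr (- real j * S_line \<alpha> \<gamma> \<sigma>) *
        ((1 + \<bar>real_of_int k - 2 ^ j * x0\<bar>) / lam) powr (S_line \<alpha> \<gamma> \<sigma> - \<sigma>)))"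

end

theory Submission
  imports Defs
begin


definition AA :: "real \<Rightarrow> nat \<Rightarrow> int \<Rightarrow> real" where
  "AA x0 j k = 1 + \<bar>real_of_int k - 2 ^ j * x0\<bar>"

lemma AA_ge1: "1 \<le> AA x0 j k" unfolding AA_def by simp

lemma AA_pos: "0 < AA x0 j k" using AA_ge1[of x0 j k] by linarith

lemma in_index_iff: "in_index x0 j k \<longleftrightarrow> \<bar>real_of_int k - 2 ^ j * x0\<bar> < 2 ^ j"
proof -
  have p: "(0::real) < 2 ^ j" by simp
  have "real_of_int k / 2 ^ j - x0 = (real_of_int k - 2 ^ j * x0) / 2 ^ j"
    using p by (simp add: field_simps)
  then have "\<bar>real_of_int k / 2 ^ j - x0\<bar> = \<bar>real_of_int k - 2 ^ j * x0\<bar> / 2 ^ j"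
    by simp
  then show ?thesis unfolding in_index_def using p by (simp add: divide_less_eq)
qed

lemma AA_le: "in_index x0 j k \<Longrightarrow> AA x0 j k \<le> 2 * 2 ^ j"
  unfolding in_index_iff AA_def
  by (smt (verit) one_le_power)

lemma lA_le: "in_index x0 j k \<Longrightarrow> log 2 (AA x0 j k) \<le> real j + 1"
proof -
  assume h: "in_index x0 j k"
  have "log 2 (AA x0 j k) \<le> log 2 (2 * 2 ^ j)"
    using AA_le[OF h] AA_pos by (subst log_le_cancel_iff) auto
  also have "\<dots> = real j + 1" by (simp add: log_mult log_nat_power)
  finally show ?thesis .
qed

lemma lA_ge: "0 \<le> log 2 (AA x0 j k)"
  using AA_ge1[of x0 j k] by simp

lemma finite_index: "finite {k. in_index x0 j k}"
proof -
  have "{k. in_index x0 j k} \<subseteq> {\<lfloor>2 ^ j * x0 - 2 ^ j\<rfloor> .. \<lceil>2 ^ j * x0 + 2 ^ j\<rceil>}"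
    unfolding in_index_iff by (auto simp: abs_less_iff floor_le_iff le_ceiling_iff)
  then show ?thesis by (rule finite_subset) simp
qed

lemma index_nonempty: "\<exists>k. in_index x0 j k"
proof -
  have "\<bar>real_of_int (round (2 ^ j * x0)) - 2 ^ j * x0\<bar> \<le> 1/2" by (rule of_int_round_abs_le)
  moreover have "(1::real) \<le> 2 ^ j" by simp
  ultimately show ?thesis unfolding in_index_iff by (intro exI[of _ "round (2 ^ j * x0)"]) linarith
qed

lemma log_bound_eq:
  assumes "K > 0" "A > 0"
  shows "log 2 (K * 2 powr u * A powr v) = log 2 K + u + v * log 2 A"
  using assms by (simp add: log_mult log_powr)

lemma tm_ineq_log:
  assumes "K > 0" "A > 0" "x > 0"
  shows "x \<le> K * 2 powr u * A powr v \<longleftrightarrow> log 2 x \<le> log 2 K + u + v * log 2 A"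
proof -
  have "x \<le> K * 2 powr u * A powr v \<longleftrightarrow> log 2 x \<le> log 2 (K * 2 powr u * A powr v)"
    using assms by (subst log_le_cancel_iff) auto
  then show ?thesis using log_bound_eq[OF assms(1,2)] by simp
qed

lemma TM_log:
  "two_microlocal c x0 s t \<longleftrightarrow>
    (\<exists>L. \<forall>j k. in_index x0 j k \<and> c j k \<noteq> 0 \<longrightarrow>
        log 2 \<bar>c j k\<bar> \<le> L - real j * s - t * log 2 (AA x0 j k))"
proof
  assume "two_microlocal c x0 s t"
  then obtain C where C: "C > 0" "\<And>j k. in_index x0 j k \<Longrightarrow>
      \<bar>c j k\<bar> \<le> C * 2 powr (- real j * s) * (AA x0 j k) powr (- t)"
    unfolding two_microlocal_def AA_def by blast
  show "\<exists>L. \<forall>j k. in_index x0 j k \<and> c j k \<noteq> 0 \<longrightarrow>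
        log 2 \<bar>c j k\<bar> \<le> L - real j * s - t * log 2 (AA x0 j k)"
  proof (intro exI[of _ "log 2 C"] allI impI)
    fix j k assume h: "in_index x0 j k \<and> c j k \<noteq> 0"
    then have "log 2 \<bar>c j k\<bar> \<le> log 2 C + (- real j * s) + (- t) * log 2 (AA x0 j k)"
      using C(2)[of j k] tm_ineq_log[OF C(1) AA_pos, of "\<bar>c j k\<bar>"] by simp
    then show "log 2 \<bar>c j k\<bar> \<le> log 2 C - real j * s - t * log 2 (AA x0 j k)" by simp
  qed
next
  assume "\<exists>L. \<forall>j k. in_index x0 j k \<and> c j k \<noteq> 0 \<longrightarrow>
        log 2 \<bar>c j k\<bar> \<le> L - real j * s - t * log 2 (AA x0 j k)"
  then obtain L where L: "\<And>j k. in_index x0 j k \<Longrightarrow> c j k \<noteq> 0 \<Longrightarrow>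
        log 2 \<bar>c j k\<bar> \<le> L - real j * s - t * log 2 (AA x0 j k)" by blast
  have "\<forall>j k. in_index x0 j k \<longrightarrow>
        \<bar>c j k\<bar> \<le> 2 powr L * 2 powr (- real j * s) * (AA x0 j k) powr (- t)"
  proof (intro allI impI)
    fix j k assume h: "in_index x0 j k"
    show "\<bar>c j k\<bar> \<le> 2 powr L * 2 powr (- real j * s) * (AA x0 j k) powr (- t)"
    proof (cases "c j k = 0")
      case True then show ?thesis by simp
    next
      case False
      have "log 2 \<bar>c j k\<bar> \<le> log 2 (2 powr L) + (- real j * s) + (- t) * log 2 (AA x0 j k)"
        using L[OF h False] by simp
      then show ?thesis using tm_ineq_log[of "2 powr L" "AA x0 j k" "\<bar>c j k\<bar>"] AA_pos False by simp
    qed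
  qed
  then show "two_microlocal c x0 s t" unfolding two_microlocal_def AA_def
    by (intro exI[of _ "2 powr L"]) simp
qed

lemma TM_mono:
  assumes "two_microlocal c x0 s t" "s1 \<le> s"
  shows "two_microlocal c x0 s1 (t + (s - s1))"
proof -
  obtain L where L: "\<And>j k. in_index x0 j k \<Longrightarrow> c j k \<noteq> 0 \<Longrightarrow>
        log 2 \<bar>c j k\<bar> \<le> L - real j * s - t * log 2 (AA x0 j k)"
    using assms(1) unfolding TM_log by blast
  show ?thesis unfolding TM_log
  proof (intro exI[of _ "L + (s - s1)"] allI impI)
    fix j k assume h: "in_index x0 j k \<and> c j k \<noteq> 0"
    have "0 \<le> (s - s1) * (real j + 1 - log 2 (AA x0 j k))"
      using lA_le[of x0 j k] h assms(2) by (intro mult_nonneg_nonneg) auto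
    then show "log 2 \<bar>c j k\<bar> \<le> L + (s - s1) - real j * s1 - (t + (s - s1)) * log 2 (AA x0 j k)"
      using L[of j k] h by (simp add: algebra_simps)
  qed
qed



lemma S_line_id: "\<gamma> < 1 \<Longrightarrow> S_line \<alpha> \<gamma> \<sigma> = \<alpha> + \<gamma> * (S_line \<alpha> \<gamma> \<sigma> - \<sigma>)"
  unfolding S_line_def by (simp add: field_simps)

lemma S_line_id2: "\<gamma> < 1 \<Longrightarrow> (1 - \<gamma>) * S_line \<alpha> \<gamma> \<sigma> = \<alpha> - \<gamma> * \<sigma>"
  unfolding S_line_def by (simp add: field_simps)

lemma S_line_T: "\<gamma> < 1 \<Longrightarrow> S_line \<alpha> \<gamma> (\<alpha> - (1 - \<gamma>) * T) - (\<alpha> - (1 - \<gamma>) * T) = T"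
  unfolding S_line_def by (simp add: field_simps)

lemma bound_inf_eq:
  assumes "lam > 0" "\<gamma> < 1"
  shows "bound_inf \<alpha> \<gamma> x0 j k lam =
    (if AA x0 j k / lam = 2 powr (\<gamma> * real j) then 2 powr (- real j * \<alpha>) else 0)"
proof -
  define r where "r = AA x0 j k / lam"
  have r: "r > 0" unfolding r_def using assms AA_pos by simp
  define q where "q = r / 2 powr (\<gamma> * real j)"
  have q: "q > 0" unfolding q_def using r by simp
  define c0 where "c0 = 2 powr (- real j * \<alpha>)"
  have c0: "c0 > 0" unfolding c0_def by simp
  define f where "f = (\<lambda>\<sigma>. 2 powr (- real j * S_line \<alpha> \<gamma> \<sigma>) *
        ((1 + \<bar>real_of_int k - 2 ^ j * x0\<bar>) / lam) powr (S_line \<alpha> \<gamma> \<sigma> - \<sigma>))"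
  have bi: "bound_inf \<alpha> \<gamma> x0 j k lam = Inf (range f)"
    unfolding bound_inf_def f_def by simp
  have fe: "f \<sigma> = c0 * q powr (S_line \<alpha> \<gamma> \<sigma> - \<sigma>)" for \<sigma>
  proof -
    define T where "T = S_line \<alpha> \<gamma> \<sigma> - \<sigma>"
    have S: "S_line \<alpha> \<gamma> \<sigma> = \<alpha> + \<gamma> * T" unfolding T_def using S_line_id[OF assms(2)] .
    have "f \<sigma> = 2 powr (- real j * S_line \<alpha> \<gamma> \<sigma>) * r powr T"
      unfolding f_def r_def AA_def T_def by simp
    also have "\<dots> = 2 powr (- real j * (\<alpha> + \<gamma> * T)) * r powr T" by (simp only: S)
    also have "\<dots> = c0 * (2 powr (- (\<gamma> * real j * T)) * r powr T)"
      unfolding c0_def by (simp add: algebra_simps flip: powr_add)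
    also have "2 powr (- (\<gamma> * real j * T)) = inverse ((2 powr (\<gamma> * real j)) powr T)"
      by (simp add: powr_powr powr_minus)
    also have "inverse ((2 powr (\<gamma> * real j)) powr T) * r powr T = q powr T"
      unfolding q_def using r by (simp add: powr_divide field_simps)
    finally show ?thesis unfolding T_def .
  qed
  show ?thesis
  proof (cases "r = 2 powr (\<gamma> * real j)")
    case True
    then have "q = 1" unfolding q_def by simp
    then have "range f = {c0}" using fe by auto
    then show ?thesis using True unfolding bi r_def c0_def by simp
  next
    case False
    then have q1: "q \<noteq> 1" unfolding q_def by simp
    have "Inf (range f) = 0"
    proof (rule cInf_eq_non_empty)
      show "range f \<noteq> {}" by simp
      show "0 \<le> x" if "x \<in> range f" for x using that fe c0 q by auto
      show "y \<le> 0" if h: "\<And>x. x \<in> range f \<Longrightarrow> y \<le> x" for y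
      proof (rule ccontr)
        assume "\<not> y \<le> 0"
        then have y: "y > 0" by simp
        define T where "T = log q (y / (2 * c0))"
        have "f (\<alpha> - (1 - \<gamma>) * T) = c0 * q powr T"
          using fe S_line_T[OF assms(2)] by simp
        also have "\<dots> = y / 2" unfolding T_def using q q1 y c0 by simp
        finally have "y \<le> y / 2" using h[of "f (\<alpha> - (1 - \<gamma>) * T)"] by simp
        then show False using y by simp
      qed
    qed
    then show ?thesis using False unfolding bi r_def by simp
  qed
qed

lemma Sup_eq_ereal:
  assumes "\<And>s. s < S \<Longrightarrow> P s" "\<And>s. P s \<Longrightarrow> s \<le> S"
  shows "Sup {ereal s | s. P s} = ereal S"
proof (rule antisym)
  show "Sup {ereal s | s. P s} \<le> ereal S" using assms(2) by (auto intro!: Sup_least)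
  show "ereal S \<le> Sup {ereal s | s. P s}"
    unfolding le_Sup_iff
  proof (intro allI impI)
    fix y assume y: "y < ereal S"
    show "\<exists>a\<in>{ereal s | s. P s}. y < a"
    proof (cases y)
      case (real r)
      then have "r < S" using y by simp
      then show ?thesis using real assms(1)[of "(r + S)/2"] by (intro bexI[of _ "ereal ((r + S)/2)"]) (auto intro!: exI[of _ "(r + S)/2"])
    next
      case PInf then show ?thesis using y by simp
    next
      case MInf then show ?thesis using assms(1)[of "S - 1"] by (intro bexI[of _ "ereal (S - 1)"]) auto
    qed
  qed
qed

lemma Sup_eq_ereal_D1:
  assumes "Sup {ereal s | s. P s} = ereal S" "P s"
  shows "s \<le> S"
proof -
  have "ereal s \<le> Sup {ereal s | s. P s}" using assms(2) by (auto intro: Sup_upper)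
  then show ?thesis using assms(1) by simp
qed

lemma Sup_eq_ereal_D2:
  assumes "Sup {ereal s | s. P s} = ereal S" "s < S"
  shows "\<exists>s2. s < s2 \<and> P s2"
proof -
  have "ereal s < Sup {ereal s | s. P s}" using assms by simp
  then show ?thesis unfolding less_Sup_iff by auto
qed



lemma nz_info:
  assumes "\<gamma> < 1" "lam > 0" "CC > 0" "c \<noteq> 0"
    "\<bar>c\<bar> \<le> CC * bound_inf \<alpha> \<gamma> x0 j k lam"
  shows "log 2 lam = log 2 (AA x0 j k) - \<gamma> * real j"
    and "log 2 \<bar>c\<bar> \<le> log 2 CC - real j * \<alpha>"
    and "\<bar>c\<bar> = CC * bound_inf \<alpha> \<gamma> x0 j k lam \<Longrightarrow> log 2 \<bar>c\<bar> = log 2 CC - real j * \<alpha>"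
proof -
  have b: "bound_inf \<alpha> \<gamma> x0 j k lam \<noteq> 0" using assms(4,5) by auto
  then have e: "AA x0 j k / lam = 2 powr (\<gamma> * real j)"
    and bi: "bound_inf \<alpha> \<gamma> x0 j k lam = 2 powr (- real j * \<alpha>)"
    using bound_inf_eq[OF assms(2,1), of \<alpha> x0 j k] by (auto split: if_splits)
  have "log 2 (AA x0 j k / lam) = \<gamma> * real j" using e by simp
  then show "log 2 lam = log 2 (AA x0 j k) - \<gamma> * real j"
    using AA_pos[of x0 j k] assms(2) by (simp add: log_divide)
  have "log 2 \<bar>c\<bar> \<le> log 2 (CC * 2 powr (- real j * \<alpha>))"
    using assms(3,4,5) bi by (subst log_le_cancel_iff) auto
  then show "log 2 \<bar>c\<bar> \<le> log 2 CC - real j * \<alpha>" using assms(3) by (simp add: log_mult)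
  show "log 2 \<bar>c\<bar> = log 2 CC - real j * \<alpha>" if "\<bar>c\<bar> = CC * bound_inf \<alpha> \<gamma> x0 j k lam"
    using that bi assms(3) by (simp add: log_mult)
qed

lemma S_identity:
  assumes "\<gamma> < 1"
  shows "(1 - \<gamma>) * (S_line \<alpha> \<gamma> \<sigma> - s) + (\<sigma> - s) * \<gamma> - \<alpha> = - s"
  using S_line_id2[OF assms, of \<alpha> \<sigma>] by (simp add: algebra_simps)

lemma bwd:
  fixes c :: "nat \<Rightarrow> int \<Rightarrow> real" and x0 \<alpha> \<gamma> :: real and CC lam :: "nat \<Rightarrow> int \<Rightarrow> real"
  assumes g0: "0 \<le> \<gamma>" and g1: "\<gamma> < 1"
  and pos: "\<forall>j k. in_index x0 j k \<longrightarrow> CC j k > 0 \<and> lam j k > 0"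
  and star: "\<forall>j k. in_index x0 j k \<longrightarrow> \<bar>c j k\<bar> \<le> CC j k * bound_inf \<alpha> \<gamma> x0 j k (lam j k)"
  and hi: "\<forall>C::real. \<forall>kj :: nat \<Rightarrow> int. (\<forall>j. in_index x0 j (kj j)) \<longrightarrow>
          limsup (\<lambda>j. ereal (log 2 (CC j (kj j)) / real j + C * (log 2 (lam j (kj j)) / real j))) \<le> 0"
  and hii: "\<exists>jn :: nat \<Rightarrow> nat. \<exists>kn :: nat \<Rightarrow> int.
          strict_mono jn \<and>
          (\<forall>n. in_index x0 (jn n) (kn n)) \<and>
          (\<forall>n. \<bar>c (jn n) (kn n)\<bar> = CC (jn n) (kn n) * bound_inf \<alpha> \<gamma> x0 (jn n) (kn n) (lam (jn n) (kn n))) \<and>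
          (\<forall>n. c (jn n) (kn n) \<noteq> 0) \<and>
          (\<lambda>n. log 2 (CC (jn n) (kn n)) / real (jn n)) \<longlonglongrightarrow> 0 \<and>
          (\<lambda>n. log 2 (lam (jn n) (kn n)) / real (jn n)) \<longlonglongrightarrow> 0"
  shows "\<forall>\<sigma>. microlocal_frontier c x0 \<sigma> = ereal (S_line \<alpha> \<gamma> \<sigma>)"
proof
  fix \<sigma>
  have nz1: "log 2 (lam j k) = log 2 (AA x0 j k) - \<gamma> * real j"
    and nz2: "log 2 \<bar>c j k\<bar> \<le> log 2 (CC j k) - real j * \<alpha>"
    if "in_index x0 j k" "c j k \<noteq> 0" for j k
    using nz_info(1,2)[OF g1, of "lam j k" "CC j k" "c j k" \<alpha> x0 j k] that pos star by auto
  have A: "two_microlocal c x0 s (\<sigma> - s)" if slt: "s < S_line \<alpha> \<gamma> \<sigma>" for s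
  proof -
    define t where "t = \<sigma> - s"
    define \<delta> where "\<delta> = (1 - \<gamma>) * (S_line \<alpha> \<gamma> \<sigma> - s)"
    have \<delta>: "\<delta> > 0" unfolding \<delta>_def using slt g1 by simp
    have idt: "\<delta> + t * \<gamma> - \<alpha> = - s" unfolding \<delta>_def t_def using S_identity[OF g1] .
    define Q where "Q j k = log 2 (CC j k) + t * log 2 (lam j k)" for j k
    define G where "G j = {k. in_index x0 j k \<and> c j k \<noteq> 0}" for j
    have finG: "finite (G j)" for j
      using finite_index[of x0 j] unfolding G_def by (rule rev_finite_subset) auto
    have "\<exists>k. in_index x0 j k \<and> (\<forall>k'\<in>G j. Q j k' \<le> Q j k)" for j
    proof (cases "G j = {}")
      case True then show ?thesis using index_nonempty by auto
    next
      case False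
      have "Max (Q j ` G j) \<in> Q j ` G j" using False finG by (intro Max_in) auto
      then obtain k where k: "k \<in> G j" "Q j k = Max (Q j ` G j)" by auto
      have "\<forall>k'\<in>G j. Q j k' \<le> Q j k" using k(2) finG by auto
      then show ?thesis using k(1) unfolding G_def by auto
    qed
    then obtain kj where kj: "\<And>j. in_index x0 j (kj j)" "\<And>j k'. k' \<in> G j \<Longrightarrow> Q j k' \<le> Q j (kj j)"
      by metis
    have "limsup (\<lambda>j. ereal (log 2 (CC j (kj j)) / real j + t * (log 2 (lam j (kj j)) / real j))) < ereal \<delta>"
    proof -
      have "limsup (\<lambda>j. ereal (log 2 (CC j (kj j)) / real j + t * (log 2 (lam j (kj j)) / real j))) \<le> 0"
        using hi kj(1) by blast
      also have "(0::ereal) < ereal \<delta>" using \<delta> by simp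
      finally show ?thesis .
    qed
    then have "\<forall>\<^sub>F j in sequentially. ereal (log 2 (CC j (kj j)) / real j + t * (log 2 (lam j (kj j)) / real j)) < ereal \<delta>"
      by (rule Limsup_lessD)
    then obtain N where N: "\<And>j. j \<ge> N \<Longrightarrow> log 2 (CC j (kj j)) / real j + t * (log 2 (lam j (kj j)) / real j) < \<delta>"
      unfolding eventually_sequentially by auto
    define N' where "N' = max N 1"
    have big: "Q j k < real j * \<delta>" if "j \<ge> N'" "k \<in> G j" for j k
    proof -
      have jp: "real j > 0" using that unfolding N'_def by simp
      have "Q j (kj j) / real j < \<delta>" using N[of j] that unfolding N'_def Q_def by (simp add: add_divide_distrib)
      then have "Q j (kj j) < real j * \<delta>" using jp by (simp add: divide_less_eq mult.commute)
      then show ?thesis using kj(2)[OF that(2)] by simp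
    qed
    define F where "F = Sigma {..<N'} G"
    have finF: "finite F" unfolding F_def using finG by auto
    define L0 where "L0 = Max (insert 0 ((\<lambda>(j,k). Q j k) ` F))"
    have L0: "0 \<le> L0" unfolding L0_def using finF by auto
    have small: "Q j k \<le> L0" if "j < N'" "k \<in> G j" for j k
    proof -
      have "(j,k) \<in> F" unfolding F_def using that by auto
      then show ?thesis unfolding L0_def using finF by (intro Max_ge) force+
    qed
    have Qb: "Q j k \<le> L0 + real j * \<delta>" if "k \<in> G j" for j k
    proof (cases "j < N'")
      case True then show ?thesis using small[OF True that] \<delta> by (simp add: add_increasing2)
    next
      case False then show ?thesis using big[of j k] that L0 by simp
    qed
    show ?thesis unfolding TM_log
    proof (intro exI[of _ L0] allI impI)
      fix j k assume h: "in_index x0 j k \<and> c j k \<noteq> 0"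
      then have kG: "k \<in> G j" unfolding G_def by simp
      have e1: "log 2 (lam j k) = log 2 (AA x0 j k) - \<gamma> * real j" using nz1 h by auto
      have e2: "log 2 \<bar>c j k\<bar> \<le> log 2 (CC j k) - real j * \<alpha>" using nz2 h by auto
      have e3: "log 2 (CC j k) + t * log 2 (lam j k) \<le> L0 + real j * \<delta>" using Qb[OF kG] unfolding Q_def .
      have e4: "real j * \<delta> + real j * (t * \<gamma>) - real j * \<alpha> = - (real j * s)"
        using arg_cong[OF idt, of "\<lambda>x. real j * x"] by (simp add: algebra_simps)
      have "log 2 \<bar>c j k\<bar> \<le> L0 + real j * \<delta> - t * log 2 (lam j k) - real j * \<alpha>" using e2 e3 by linarith
      also have "\<dots> = L0 + real j * \<delta> + real j * (t * \<gamma>) - real j * \<alpha> - t * log 2 (AA x0 j k)"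
        unfolding e1 by (simp add: algebra_simps)
      also have "\<dots> = L0 - real j * s - t * log 2 (AA x0 j k)" using e4 by linarith
      finally show "log 2 \<bar>c j k\<bar> \<le> L0 - real j * s - (\<sigma> - s) * log 2 (AA x0 j k)" unfolding t_def .
    qed
  qed
  have B: "s \<le> S_line \<alpha> \<gamma> \<sigma>" if tm: "two_microlocal c x0 s (\<sigma> - s)" for s
  proof -
    define t where "t = \<sigma> - s"
    define \<delta> where "\<delta> = (1 - \<gamma>) * (S_line \<alpha> \<gamma> \<sigma> - s)"
    have idt: "\<delta> + t * \<gamma> - \<alpha> = - s" unfolding \<delta>_def t_def using S_identity[OF g1] .
    obtain L where L: "\<And>j k. in_index x0 j k \<Longrightarrow> c j k \<noteq> 0 \<Longrightarrow>
        log 2 \<bar>c j k\<bar> \<le> L - real j * s - t * log 2 (AA x0 j k)"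
      using tm unfolding TM_log t_def by blast
    obtain jn kn where jn: "strict_mono jn" "\<And>n. in_index x0 (jn n) (kn n)"
      "\<And>n. \<bar>c (jn n) (kn n)\<bar> = CC (jn n) (kn n) * bound_inf \<alpha> \<gamma> x0 (jn n) (kn n) (lam (jn n) (kn n))"
      "\<And>n. c (jn n) (kn n) \<noteq> 0"
      "(\<lambda>n. log 2 (CC (jn n) (kn n)) / real (jn n)) \<longlonglongrightarrow> 0"
      "(\<lambda>n. log 2 (lam (jn n) (kn n)) / real (jn n)) \<longlonglongrightarrow> 0"
      using hii by blast
    have ineq: "log 2 (CC (jn n) (kn n)) / real (jn n) + t * (log 2 (lam (jn n) (kn n)) / real (jn n))
        \<le> L / real (jn n) + \<delta>" if n1: "n \<ge> 1" for n
    proof -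
      let ?j = "jn n" and ?k = "kn n"
      have jp: "real ?j > 0" using seq_suble[OF jn(1), of n] n1 by simp
      have e1: "log 2 (lam ?j ?k) = log 2 (AA x0 ?j ?k) - \<gamma> * real ?j"
        using nz1 jn(2,4) by auto
      have e2: "log 2 \<bar>c ?j ?k\<bar> = log 2 (CC ?j ?k) - real ?j * \<alpha>"
        using nz_info(3)[OF g1, of "lam ?j ?k" "CC ?j ?k" "c ?j ?k"] pos star jn(2,3,4) by auto
      have e4: "real ?j * \<delta> + real ?j * (t * \<gamma>) - real ?j * \<alpha> = - (real ?j * s)"
        using arg_cong[OF idt, of "\<lambda>x. real ?j * x"] by (simp add: algebra_simps)
      have "log 2 (CC ?j ?k) - real ?j * \<alpha> \<le> L - real ?j * s - t * log 2 (AA x0 ?j ?k)"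
        using L[OF jn(2)[of n] jn(4)[of n]] e2 by simp
      then have "log 2 (CC ?j ?k) + t * log 2 (lam ?j ?k) \<le> L + real ?j * \<delta>"
        unfolding e1 using e4 by (simp add: algebra_simps)
      then have "(log 2 (CC ?j ?k) + t * log 2 (lam ?j ?k)) / real ?j \<le> (L + real ?j * \<delta>) / real ?j"
        using jp by (simp add: divide_right_mono)
      then show ?thesis using jp by (simp add: add_divide_distrib)
    qed
    have l1: "(\<lambda>n. log 2 (CC (jn n) (kn n)) / real (jn n) + t * (log 2 (lam (jn n) (kn n)) / real (jn n))) \<longlonglongrightarrow> 0 + t * 0"
      by (intro tendsto_intros jn(5,6))
    have "((\<lambda>n. L / real n) \<circ> jn) \<longlonglongrightarrow> 0" by (rule LIMSEQ_subseq_LIMSEQ[OF lim_const_over_n jn(1)])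
    then have l2: "(\<lambda>n. L / real (jn n) + \<delta>) \<longlonglongrightarrow> 0 + \<delta>"
      by (intro tendsto_intros) (simp add: o_def)
    have "0 + t * 0 \<le> 0 + \<delta>"
      by (rule LIMSEQ_le[OF l1 l2]) (use ineq in auto)
    then have "0 \<le> \<delta>" by simp
    then show ?thesis unfolding \<delta>_def using g1 by (simp add: zero_le_mult_iff)
  qed
  show "microlocal_frontier c x0 \<sigma> = ereal (S_line \<alpha> \<gamma> \<sigma>)"
    unfolding microlocal_frontier_def by (rule Sup_eq_ereal[OF A B])
qed



lemma fwd_UB:
  assumes g1: "\<gamma> < 1" and hF: "\<forall>\<sigma>. microlocal_frontier c x0 \<sigma> = ereal (S_line \<alpha> \<gamma> \<sigma>)"
    and e: "\<epsilon> > 0"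
  shows "\<exists>L. \<forall>j k. in_index x0 j k \<and> c j k \<noteq> 0 \<longrightarrow>
     log 2 \<bar>c j k\<bar> + real j * \<alpha> + t * (log 2 (AA x0 j k) - \<gamma> * real j) \<le> L + real j * \<epsilon>"
proof -
  define s where "s = \<alpha> - \<gamma> * t - \<epsilon>"
  define \<sigma> where "\<sigma> = s + t"
  have "(1 - \<gamma>) * S_line \<alpha> \<gamma> \<sigma> = \<alpha> - \<gamma> * \<sigma>" by (rule S_line_id2[OF g1])
  then have "(1 - \<gamma>) * (S_line \<alpha> \<gamma> \<sigma> - s) = \<epsilon>"
    unfolding \<sigma>_def s_def by (simp add: algebra_simps)
  then have "0 < (1 - \<gamma>) * (S_line \<alpha> \<gamma> \<sigma> - s)" using e by simp
  then have "s < S_line \<alpha> \<gamma> \<sigma>" using g1 by (simp add: zero_less_mult_iff)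
  then obtain s2 where s2: "s < s2" "two_microlocal c x0 s2 (\<sigma> - s2)"
    using Sup_eq_ereal_D2[of "\<lambda>s. two_microlocal c x0 s (\<sigma> - s)"] hF
    unfolding microlocal_frontier_def by blast
  have "two_microlocal c x0 s (\<sigma> - s2 + (s2 - s))" using TM_mono[OF s2(2)] s2(1) by simp
  then have "two_microlocal c x0 s t" unfolding \<sigma>_def by simp
  then obtain L where L: "\<And>j k. in_index x0 j k \<Longrightarrow> c j k \<noteq> 0 \<Longrightarrow>
        log 2 \<bar>c j k\<bar> \<le> L - real j * s - t * log 2 (AA x0 j k)"
    unfolding TM_log by blast
  show ?thesis
  proof (intro exI[of _ L] allI impI)
    fix j k assume h: "in_index x0 j k \<and> c j k \<noteq> 0"
    have "real j * s = real j * \<alpha> - real j * (\<gamma> * t) - real j * \<epsilon>" unfolding s_def by (simp add: algebra_simps)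
    then show "log 2 \<bar>c j k\<bar> + real j * \<alpha> + t * (log 2 (AA x0 j k) - \<gamma> * real j) \<le> L + real j * \<epsilon>"
      using L[of j k] h by (simp add: algebra_simps)
  qed
qed

lemma fwd_VIOL:
  assumes g0: "0 \<le> \<gamma>" and g1: "\<gamma> < 1" and hF: "\<forall>\<sigma>. microlocal_frontier c x0 \<sigma> = ereal (S_line \<alpha> \<gamma> \<sigma>)"
    and e: "\<epsilon> > 0"
  shows "\<exists>j k. in_index x0 j k \<and> c j k \<noteq> 0 \<and> L - real j * \<epsilon> < log 2 \<bar>c j k\<bar> + real j * \<alpha>"
proof -
  define s where "s = \<alpha> + \<epsilon>"
  have "S_line \<alpha> \<gamma> s \<le> \<alpha>" unfolding S_line_def s_def using g0 g1 e
    by (simp add: mult_nonneg_nonneg)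
  moreover have "s \<le> S_line \<alpha> \<gamma> s" if "two_microlocal c x0 s (s - s)"
    using Sup_eq_ereal_D1[of "\<lambda>s'. two_microlocal c x0 s' (s - s')" "S_line \<alpha> \<gamma> s" s] hF that
    unfolding microlocal_frontier_def by blast
  moreover have "\<alpha> < s" unfolding s_def using e by simp
  ultimately have "\<not> two_microlocal c x0 s (s - s)" by linarith
  then have "\<not> (\<forall>j k. in_index x0 j k \<and> c j k \<noteq> 0 \<longrightarrow>
        log 2 \<bar>c j k\<bar> \<le> L - real j * s - 0 * log 2 (AA x0 j k))"
    unfolding TM_log by auto
  then obtain j k where "in_index x0 j k" "c j k \<noteq> 0"
    "\<not> log 2 \<bar>c j k\<bar> \<le> L - real j * s - 0 * log 2 (AA x0 j k)" by blast
  then show ?thesis unfolding s_def by (intro exI[of _ j] exI[of _ k]) (auto simp: algebra_simps)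
qed



lemma fwd_EX:
  assumes g0: "0 \<le> \<gamma>" and g1: "\<gamma> < 1" and hF: "\<forall>\<sigma>. microlocal_frontier c x0 \<sigma> = ereal (S_line \<alpha> \<gamma> \<sigma>)"
    and e: "\<epsilon> > 0"
  shows "\<exists>j k. J < j \<and> in_index x0 j k \<and> c j k \<noteq> 0 \<and>
     \<bar>(log 2 \<bar>c j k\<bar> + real j * \<alpha>) / real j\<bar> < \<epsilon> \<and>
     \<bar>(log 2 (AA x0 j k) - \<gamma> * real j) / real j\<bar> < \<epsilon>"
proof -
  define e' where "e' = \<epsilon> / 4"
  have e': "e' > 0" unfolding e'_def using e by simp
  obtain L0 where L0: "\<And>j k. in_index x0 j k \<Longrightarrow> c j k \<noteq> 0 \<Longrightarrow>
     log 2 \<bar>c j k\<bar> + real j * \<alpha> + 0 * (log 2 (AA x0 j k) - \<gamma> * real j) \<le> L0 + real j * e'"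
    using fwd_UB[OF g1 hF e', of 0] by blast
  obtain L1 where L1: "\<And>j k. in_index x0 j k \<Longrightarrow> c j k \<noteq> 0 \<Longrightarrow>
     log 2 \<bar>c j k\<bar> + real j * \<alpha> + 1 * (log 2 (AA x0 j k) - \<gamma> * real j) \<le> L1 + real j * e'"
    using fwd_UB[OF g1 hF e', of 1] by blast
  obtain L2 where L2: "\<And>j k. in_index x0 j k \<Longrightarrow> c j k \<noteq> 0 \<Longrightarrow>
     log 2 \<bar>c j k\<bar> + real j * \<alpha> + (-1) * (log 2 (AA x0 j k) - \<gamma> * real j) \<le> L2 + real j * e'"
    using fwd_UB[OF g1 hF e', of "-1"] by blast
  obtain M :: nat where M: "(\<bar>L0\<bar> + \<bar>L1\<bar> + \<bar>L2\<bar>) / e' < real M"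
    using reals_Archimedean2 by blast
  have Me: "\<bar>L0\<bar> + \<bar>L1\<bar> + \<bar>L2\<bar> < real M * e'" using M e' by (simp add: divide_less_eq)
  define L where "L = L0 + 2 * e' * (real J + real M + 1)"
  obtain j k where jk: "in_index x0 j k" "c j k \<noteq> 0" "L - real j * e' < log 2 \<bar>c j k\<bar> + real j * \<alpha>"
    using fwd_VIOL[OF g0 g1 hF e', of L] by blast
  define X where "X = log 2 \<bar>c j k\<bar> + real j * \<alpha>"
  define Y where "Y = log 2 (AA x0 j k) - \<gamma> * real j"
  have b0: "X \<le> L0 + real j * e'" using L0[OF jk(1,2)] unfolding X_def by simp
  have b1: "X + Y \<le> L1 + real j * e'" using L1[OF jk(1,2)] unfolding X_def Y_def by simp
  have b2: "X - Y \<le> L2 + real j * e'" using L2[OF jk(1,2)] unfolding X_def Y_def by simp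
  have bv: "L - real j * e' < X" using jk(3) unfolding X_def .
  have "2 * e' * (real J + real M + 1) < 2 * e' * real j"
    using b0 bv unfolding L_def by (simp add: algebra_simps)
  then have jJM: "real J + real M + 1 < real j" using e' by simp
  then have jJ: "J < j" by simp
  have jp: "real j > 0" using jJM by simp
  have "real M * e' < real j * e'" using jJM e' by (intro mult_strict_right_mono) auto
  then have Lj: "\<bar>L0\<bar> + \<bar>L1\<bar> + \<bar>L2\<bar> < real j * e'" using Me by linarith
  have "0 \<le> 2 * e' * (real J + real M + 1)" using e' by simp
  have "2 * e' * (real J + real M + 1) \<ge> 2 * (real M * e')" using e' by (simp add: algebra_simps)
  then have Lnn: "0 \<le> L" unfolding L_def using Me by linarith
  have je: "real j * \<epsilon> = 4 * (real j * e')" unfolding e'_def by simp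
  have ab: "L0 \<le> \<bar>L0\<bar>" "-L0 \<le> \<bar>L0\<bar>" "L1 \<le> \<bar>L1\<bar>" "-L1 \<le> \<bar>L1\<bar>" "L2 \<le> \<bar>L2\<bar>" "-L2 \<le> \<bar>L2\<bar>"
    by auto
  have ab2: "0 < real j * e'" using jp e' by simp
  have hX: "\<bar>X\<bar> < real j * \<epsilon>" unfolding abs_less_iff je using b0 bv Lnn Lj ab ab2 by linarith
  have hY: "\<bar>Y\<bar> < real j * \<epsilon>" unfolding abs_less_iff je using b0 b1 b2 bv Lnn Lj ab ab2 by linarith
  have "\<bar>X / real j\<bar> < \<epsilon>" using hX jp by (simp add: abs_divide divide_less_eq mult.commute)
  moreover have "\<bar>Y / real j\<bar> < \<epsilon>" using hY jp by (simp add: abs_divide divide_less_eq mult.commute)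
  ultimately show ?thesis using jJ jk(1,2) unfolding X_def Y_def by blast
qed



lemma fwd:
  fixes c :: "nat \<Rightarrow> int \<Rightarrow> real" and x0 \<alpha> \<gamma> :: real
  assumes g0: "0 \<le> \<gamma>" and g1: "\<gamma> < 1"
    and hF: "\<forall>\<sigma>. microlocal_frontier c x0 \<sigma> = ereal (S_line \<alpha> \<gamma> \<sigma>)"
  shows "\<exists>CC lam :: nat \<Rightarrow> int \<Rightarrow> real.
       (\<forall>j k. in_index x0 j k \<longrightarrow> CC j k > 0 \<and> lam j k > 0) \<and>
       (\<forall>j k. in_index x0 j k \<longrightarrow> \<bar>c j k\<bar> \<le> CC j k * bound_inf \<alpha> \<gamma> x0 j k (lam j k)) \<and>
       (\<forall>C::real. \<forall>kj :: nat \<Rightarrow> int. (\<forall>j. in_index x0 j (kj j)) \<longrightarrow>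
          limsup (\<lambda>j. ereal (log 2 (CC j (kj j)) / real j + C * (log 2 (lam j (kj j)) / real j))) \<le> 0) \<and>
       (\<exists>jn :: nat \<Rightarrow> nat. \<exists>kn :: nat \<Rightarrow> int.
          strict_mono jn \<and>
          (\<forall>n. in_index x0 (jn n) (kn n)) \<and>
          (\<forall>n. \<bar>c (jn n) (kn n)\<bar> = CC (jn n) (kn n) * bound_inf \<alpha> \<gamma> x0 (jn n) (kn n) (lam (jn n) (kn n))) \<and>
          (\<forall>n. c (jn n) (kn n) \<noteq> 0) \<and>
          (\<lambda>n. log 2 (CC (jn n) (kn n)) / real (jn n)) \<longlonglongrightarrow> 0 \<and>
          (\<lambda>n. log 2 (lam (jn n) (kn n)) / real (jn n)) \<longlonglongrightarrow> 0)"
proof -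
  define CC where "CC = (\<lambda>j k. if c j k \<noteq> 0 then \<bar>c j k\<bar> * 2 powr (real j * \<alpha>) else (1::real))"
  define lam where "lam = (\<lambda>j k. if c j k \<noteq> 0 then AA x0 j k / 2 powr (\<gamma> * real j) else (1::real))"
  have pos: "CC j k > 0 \<and> lam j k > 0" for j k
    unfolding CC_def lam_def using AA_pos[of x0 j k] by auto
  have cc_log: "log 2 (CC j k) = log 2 \<bar>c j k\<bar> + real j * \<alpha>" if "c j k \<noteq> 0" for j k
    unfolding CC_def using that by (simp add: log_mult)
  have lam_log: "log 2 (lam j k) = log 2 (AA x0 j k) - \<gamma> * real j" if "c j k \<noteq> 0" for j k
    unfolding lam_def using that AA_pos[of x0 j k] by (simp add: log_divide)
  have bi: "bound_inf \<alpha> \<gamma> x0 j k (lam j k) = 2 powr (- real j * \<alpha>)" if "c j k \<noteq> 0" for j k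
  proof -
    have "AA x0 j k / lam j k = 2 powr (\<gamma> * real j)"
      unfolding lam_def using that AA_pos[of x0 j k] by simp
    then show ?thesis using bound_inf_eq[OF _ g1, of "lam j k" \<alpha> x0 j k] pos by simp
  qed
  have eq: "\<bar>c j k\<bar> = CC j k * bound_inf \<alpha> \<gamma> x0 j k (lam j k)" if "c j k \<noteq> 0" for j k
  proof -
    have "CC j k * bound_inf \<alpha> \<gamma> x0 j k (lam j k) = \<bar>c j k\<bar> * (2 powr (real j * \<alpha>) * 2 powr (- real j * \<alpha>))"
      unfolding bi[OF that] CC_def using that by simp
    also have "2 powr (real j * \<alpha>) * 2 powr (- real j * \<alpha>) = 1" by (simp flip: powr_add)
    finally show ?thesis by simp
  qed
  have bi_nn: "0 \<le> bound_inf \<alpha> \<gamma> x0 j k (lam j k)" for j k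
    using bound_inf_eq[OF _ g1, of "lam j k" \<alpha> x0 j k] pos[of j k] by simp
  have star: "\<bar>c j k\<bar> \<le> CC j k * bound_inf \<alpha> \<gamma> x0 j k (lam j k)" for j k
  proof (cases "c j k = 0")
    case True then show ?thesis using bi_nn[of j k] pos[of j k] by simp
  next
    case False then show ?thesis using eq by simp
  qed
  have i: "limsup (\<lambda>j. ereal (log 2 (CC j (kj j)) / real j + C * (log 2 (lam j (kj j)) / real j))) \<le> 0"
    if kj: "\<forall>j. in_index x0 j (kj j)" for C kj
  proof (rule ereal_le_epsilon2)
    fix e :: real assume e: "0 < e"
    have e2: "e / 2 > 0" using e by simp
    obtain L where L: "\<And>j k. in_index x0 j k \<Longrightarrow> c j k \<noteq> 0 \<Longrightarrow>
     log 2 \<bar>c j k\<bar> + real j * \<alpha> + C * (log 2 (AA x0 j k) - \<gamma> * real j) \<le> L + real j * (e/2)"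
      using fwd_UB[OF g1 hF e2, of C] by blast
    obtain N :: nat where N: "\<bar>L\<bar> / (e/2) < real N" using reals_Archimedean2 by blast
    have "\<forall>\<^sub>F j in sequentially. ereal (log 2 (CC j (kj j)) / real j + C * (log 2 (lam j (kj j)) / real j)) \<le> ereal e"
      unfolding eventually_sequentially
    proof (intro exI[of _ "max N 1"] allI impI)
      fix j assume j: "max N 1 \<le> j"
      have jp: "real j > 0" using j by simp
      have E: "log 2 (CC j (kj j)) / real j + C * (log 2 (lam j (kj j)) / real j)
          = (log 2 (CC j (kj j)) + C * log 2 (lam j (kj j))) / real j"
        by (simp add: add_divide_distrib)
      show "ereal (log 2 (CC j (kj j)) / real j + C * (log 2 (lam j (kj j)) / real j)) \<le> ereal e"
      proof (cases "c j (kj j) = 0")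
        case True then show ?thesis unfolding CC_def lam_def using e by simp
      next
        case False
        have "\<bar>L\<bar> < real N * (e/2)" using N e2 by (simp add: divide_less_eq)
        also have "\<dots> \<le> real j * (e/2)" using j e2 by (intro mult_right_mono) auto
        finally have Lj: "L < real j * (e/2)" by linarith
        have "log 2 (CC j (kj j)) + C * log 2 (lam j (kj j)) \<le> L + real j * (e/2)"
          using L[OF kj[rule_format] False] cc_log[OF False] lam_log[OF False] by simp
        also have "\<dots> \<le> real j * e" using Lj by simp
        finally have "(log 2 (CC j (kj j)) + C * log 2 (lam j (kj j))) / real j \<le> e"
          using jp by (simp add: divide_le_eq mult.commute)
        then show ?thesis unfolding E by simp
      qed
    qed
    then have "limsup (\<lambda>j. ereal (log 2 (CC j (kj j)) / real j + C * (log 2 (lam j (kj j)) / real j))) \<le> ereal e"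
      by (rule Limsup_bounded)
    then show "limsup (\<lambda>j. ereal (log 2 (CC j (kj j)) / real j + C * (log 2 (lam j (kj j)) / real j))) \<le> 0 + ereal e"
      by simp
  qed
  define Good where "Good = (\<lambda>\<epsilon> J (p :: nat \<times> int). J < fst p \<and> in_index x0 (fst p) (snd p) \<and> c (fst p) (snd p) \<noteq> 0 \<and>
     \<bar>log 2 (CC (fst p) (snd p)) / real (fst p)\<bar> < \<epsilon> \<and>
     \<bar>log 2 (lam (fst p) (snd p)) / real (fst p)\<bar> < \<epsilon>)"
  have exG: "\<exists>p. Good \<epsilon> J p" if ep: "\<epsilon> > 0" for \<epsilon> J
  proof -
    obtain j k where jk: "J < j" "in_index x0 j k" "c j k \<noteq> 0"
      "\<bar>(log 2 \<bar>c j k\<bar> + real j * \<alpha>) / real j\<bar> < \<epsilon>"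
      "\<bar>(log 2 (AA x0 j k) - \<gamma> * real j) / real j\<bar> < \<epsilon>"
      using fwd_EX[OF g0 g1 hF ep, of J] by blast
    show ?thesis using jk cc_log[OF jk(3)] lam_log[OF jk(3)] unfolding Good_def
      by (intro exI[of _ "(j,k)"]) simp
  qed
  define pick where "pick = (\<lambda>\<epsilon> J. SOME p. Good \<epsilon> J p)"
  have pickG: "Good \<epsilon> J (pick \<epsilon> J)" if "\<epsilon> > 0" for \<epsilon> J
    unfolding pick_def using exG[OF that] by (rule someI_ex)
  define js where "js = rec_nat (pick 1 0) (\<lambda>n p. pick (1 / real (Suc (Suc n))) (fst p))"
  have js0: "js 0 = pick 1 0" unfolding js_def by simp
  have jsS: "js (Suc n) = pick (1 / real (Suc (Suc n))) (fst (js n))" for n unfolding js_def by simp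
  have G1: "Good (1 / real (Suc n)) (if n = 0 then 0 else fst (js (n - 1))) (js n)" for n
  proof (cases n)
    case 0 then show ?thesis using pickG[of 1 0] js0 by simp
  next
    case (Suc m) then show ?thesis using pickG[of "1 / real (Suc (Suc m))" "fst (js m)"] jsS[of m] by simp
  qed
  define jn where "jn = (\<lambda>n. fst (js n))"
  define kn where "kn = (\<lambda>n. snd (js n))"
  have smono: "strict_mono jn"
    unfolding strict_mono_Suc_iff
  proof
    fix n show "jn n < jn (Suc n)" using G1[of "Suc n"] unfolding Good_def jn_def by simp
  qed
  have Gn: "in_index x0 (jn n) (kn n) \<and> c (jn n) (kn n) \<noteq> 0 \<and>
     \<bar>log 2 (CC (jn n) (kn n)) / real (jn n)\<bar> < 1 / real (Suc n) \<and>
     \<bar>log 2 (lam (jn n) (kn n)) / real (jn n)\<bar> < 1 / real (Suc n)" for n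
    using G1[of n] unfolding Good_def jn_def kn_def by simp
  have l1: "(\<lambda>n. log 2 (CC (jn n) (kn n)) / real (jn n)) \<longlonglongrightarrow> 0"
    by (rule LIMSEQ_norm_0) (use Gn in simp)
  have l2: "(\<lambda>n. log 2 (lam (jn n) (kn n)) / real (jn n)) \<longlonglongrightarrow> 0"
    by (rule LIMSEQ_norm_0) (use Gn in simp)
  have ii: "\<exists>jn :: nat \<Rightarrow> nat. \<exists>kn :: nat \<Rightarrow> int.
          strict_mono jn \<and>
          (\<forall>n. in_index x0 (jn n) (kn n)) \<and>
          (\<forall>n. \<bar>c (jn n) (kn n)\<bar> = CC (jn n) (kn n) * bound_inf \<alpha> \<gamma> x0 (jn n) (kn n) (lam (jn n) (kn n))) \<and>
          (\<forall>n. c (jn n) (kn n) \<noteq> 0) \<and>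
          (\<lambda>n. log 2 (CC (jn n) (kn n)) / real (jn n)) \<longlonglongrightarrow> 0 \<and>
          (\<lambda>n. log 2 (lam (jn n) (kn n)) / real (jn n)) \<longlonglongrightarrow> 0"
    using smono Gn eq l1 l2 by blast
  show ?thesis
    using pos star i ii by (intro exI[of _ CC] exI[of _ lam]) blast
qed


theorem theorem2p2:
  fixes c :: "nat \<Rightarrow> int \<Rightarrow> real" and x0 \<alpha> \<gamma> :: real
  assumes "0 \<le> \<gamma>" and "\<gamma> < 1"
  shows "(\<forall>\<sigma>. microlocal_frontier c x0 \<sigma> = ereal (S_line \<alpha> \<gamma> \<sigma>)) \<longleftrightarrow>
    (\<exists>CC lam :: nat \<Rightarrow> int \<Rightarrow> real.
       (\<forall>j k. in_index x0 j k \<longrightarrow> CC j k > 0 \<and> lam j k > 0) \<and>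
       (\<forall>j k. in_index x0 j k \<longrightarrow> \<bar>c j k\<bar> \<le> CC j k * bound_inf \<alpha> \<gamma> x0 j k (lam j k)) \<and>
       (\<forall>C::real. \<forall>kj :: nat \<Rightarrow> int. (\<forall>j. in_index x0 j (kj j)) \<longrightarrow>
          limsup (\<lambda>j. ereal (log 2 (CC j (kj j)) / real j + C * (log 2 (lam j (kj j)) / real j))) \<le> 0) \<and>
       (\<exists>jn :: nat \<Rightarrow> nat. \<exists>kn :: nat \<Rightarrow> int.
          strict_mono jn \<and>
          (\<forall>n. in_index x0 (jn n) (kn n)) \<and>
          (\<forall>n. \<bar>c (jn n) (kn n)\<bar> = CC (jn n) (kn n) * bound_inf \<alpha> \<gamma> x0 (jn n) (kn n) (lam (jn n) (kn n))) \<and>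
          (\<forall>n. c (jn n) (kn n) \<noteq> 0) \<and>
          (\<lambda>n. log 2 (CC (jn n) (kn n)) / real (jn n)) \<longlonglongrightarrow> 0 \<and>
          (\<lambda>n. log 2 (lam (jn n) (kn n)) / real (jn n)) \<longlonglongrightarrow> 0))"
  proof
  assume H: "\<forall>\<sigma>. microlocal_frontier c x0 \<sigma> = ereal (S_line \<alpha> \<gamma> \<sigma>)"
  show "\<exists>CC lam :: nat \<Rightarrow> int \<Rightarrow> real.
       (\<forall>j k. in_index x0 j k \<longrightarrow> CC j k > 0 \<and> lam j k > 0) \<and>
       (\<forall>j k. in_index x0 j k \<longrightarrow> \<bar>c j k\<bar> \<le> CC j k * bound_inf \<alpha> \<gamma> x0 j k (lam j k)) \<and>
       (\<forall>C::real. \<forall>kj :: nat \<Rightarrow> int. (\<forall>j. in_index x0 j (kj j)) \<longrightarrow>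
          limsup (\<lambda>j. ereal (log 2 (CC j (kj j)) / real j + C * (log 2 (lam j (kj j)) / real j))) \<le> 0) \<and>
       (\<exists>jn :: nat \<Rightarrow> nat. \<exists>kn :: nat \<Rightarrow> int.
          strict_mono jn \<and>
          (\<forall>n. in_index x0 (jn n) (kn n)) \<and>
          (\<forall>n. \<bar>c (jn n) (kn n)\<bar> = CC (jn n) (kn n) * bound_inf \<alpha> \<gamma> x0 (jn n) (kn n) (lam (jn n) (kn n))) \<and>
          (\<forall>n. c (jn n) (kn n) \<noteq> 0) \<and>
          (\<lambda>n. log 2 (CC (jn n) (kn n)) / real (jn n)) \<longlonglongrightarrow> 0 \<and>
          (\<lambda>n. log 2 (lam (jn n) (kn n)) / real (jn n)) \<longlonglongrightarrow> 0)"
    by (rule fwd[OF assms H])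
next
  assume H: "\<exists>CC lam :: nat \<Rightarrow> int \<Rightarrow> real.
       (\<forall>j k. in_index x0 j k \<longrightarrow> CC j k > 0 \<and> lam j k > 0) \<and>
       (\<forall>j k. in_index x0 j k \<longrightarrow> \<bar>c j k\<bar> \<le> CC j k * bound_inf \<alpha> \<gamma> x0 j k (lam j k)) \<and>
       (\<forall>C::real. \<forall>kj :: nat \<Rightarrow> int. (\<forall>j. in_index x0 j (kj j)) \<longrightarrow>
          limsup (\<lambda>j. ereal (log 2 (CC j (kj j)) / real j + C * (log 2 (lam j (kj j)) / real j))) \<le> 0) \<and>
       (\<exists>jn :: nat \<Rightarrow> nat. \<exists>kn :: nat \<Rightarrow> int.
          strict_mono jn \<and>
          (\<forall>n. in_index x0 (jn n) (kn n)) \<and>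
          (\<forall>n. \<bar>c (jn n) (kn n)\<bar> = CC (jn n) (kn n) * bound_inf \<alpha> \<gamma> x0 (jn n) (kn n) (lam (jn n) (kn n))) \<and>
          (\<forall>n. c (jn n) (kn n) \<noteq> 0) \<and>
          (\<lambda>n. log 2 (CC (jn n) (kn n)) / real (jn n)) \<longlonglongrightarrow> 0 \<and>
          (\<lambda>n. log 2 (lam (jn n) (kn n)) / real (jn n)) \<longlonglongrightarrow> 0)"
  show "\<forall>\<sigma>. microlocal_frontier c x0 \<sigma> = ereal (S_line \<alpha> \<gamma> \<sigma>)"
    apply (insert H)
    apply (erule exE)
    apply (erule exE)
    apply (erule conjE)+
    apply (rule bwd[OF assms])
       apply assumption+
    done
qed

end
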